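(* A division ring $D$ is locally finite if and only if $D$ is weakly locally finite and algebraic over its center.
   Context: Let $D$ have center $F$. $D$ is locally finite if for every finite subset $S\subseteq D$, the division subring $F(S)$ generated by $S$ over $F$ is finite dimensional over $F$. $D$ is weakly locally finite if for every finite subset $S\subseteq D$, the division subring generated by $S$ is finite dimensional over its own center. $D$ is algebraic if every element of $D$ is algebraic over $F$. *)

theory Defs
  imports Main
begin

definition center :: "'a::division_ring set \<Rightarrow> 'a set" where
  "center E = {z \<in> E. \<forall>x\<in>E. z * x = x * z}"

definition division_subring :: "'a::division_ring set \<Rightarrow> bool" where
  "division_subring E \<longleftrightarrow> 0 \<in> E \<and> 1 \<in> E \<and>
     (\<forall>x\<in>E. \<forall>y\<in>E. x + y \<in> E \<and> x * y \<in> E) \<and>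
     (\<forall>x\<in>E. - x \<in> E \<and> inverse x \<in> E)"

definition gen_div_subring :: "'a::division_ring set \<Rightarrow> 'a set" where
  "gen_div_subring S = \<Inter> {E. division_subring E \<and> S \<subseteq> E}"

definition fin_dim_over :: "'a::division_ring set \<Rightarrow> 'a set \<Rightarrow> bool" where
  "fin_dim_over K A \<longleftrightarrow> (\<exists>B. finite B \<and> B \<subseteq> A \<and>
      (\<forall>a\<in>A. \<exists>c. (\<forall>b\<in>B. c b \<in> K) \<and> a = (\<Sum>b\<in>B. c b * b)))"

definition locally_finite :: "'a::division_ring itself \<Rightarrow> bool" where
  "locally_finite _ \<longleftrightarrow> (\<forall>S::'a set. finite S \<longrightarrow>
      fin_dim_over (center UNIV) (gen_div_subring (center UNIV \<union> S)))"

definition weakly_locally_finite :: "'a::division_ring itself \<Rightarrow> bool" where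
  "weakly_locally_finite _ \<longleftrightarrow> (\<forall>S::'a set. finite S \<longrightarrow>
      fin_dim_over (center (gen_div_subring S)) (gen_div_subring S))"

text \<open>x is algebraic over the subfield K: root of a nonzero polynomial with coefficients in K
  (K central, so the side of the coefficients is irrelevant).\<close>
definition algebraic_over :: "'a::division_ring set \<Rightarrow> 'a \<Rightarrow> bool" where
  "algebraic_over K x \<longleftrightarrow> (\<exists>n c. (\<forall>i\<le>n. c i \<in> K) \<and> (\<exists>i\<le>n. c i \<noteq> 0) \<and>
      (\<Sum>i\<le>n. c i * x ^ i) = 0)"

definition algebraic_dr :: "'a::division_ring itself \<Rightarrow> bool" where
  "algebraic_dr _ \<longleftrightarrow> (\<forall>x::'a. algebraic_over (center UNIV) x)"

end

theory Submission
  imports Defs "HOL-Algebra.Finite_Extensions"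
begin

definition R0 :: "'a::division_ring ring" where
  "R0 = \<lparr>carrier = UNIV, monoid.mult = (*), one = 1, ring.zero = 0, add = (+)\<rparr>"

lemma R0_simps [simp]:
  "carrier R0 = UNIV" "mult R0 = (*)" "one R0 = 1" "zero R0 = 0" "add R0 = (+)"
  by (simp_all add: R0_def)

lemma ring_R0: "ring (R0::'a::division_ring ring)"
proof -
  have "\<exists>y. x + y = 0" for x :: 'a
    using add.right_inverse by blast
  thus ?thesis
    unfolding R0_def using add.right_inverse
    by unfold_locales (auto simp:algebra_simps Units_def)
qed

interpretation R: ring "R0::'a::division_ring ring"
  by (rule ring_R0)

lemma R0_ainv [simp]: "a_inv R0 x = - (x::'a::division_ring)"
  by (rule R.minus_equality) simp_all

lemma R0_pow [simp]: "x [^]\<^bsub>R0\<^esub> (n::nat) = (x::'a::division_ring) ^ n"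
  by (induct n) (simp_all add: mult.commute power_commutes)

declare R.Span.simps[simp del]

lemma ds_Inter: "(\<And>E. E \<in> \<E> \<Longrightarrow> division_subring E) \<Longrightarrow> division_subring (\<Inter> \<E>)"
  unfolding division_subring_def by blast

lemma ds_gen: "division_subring (gen_div_subring S)"
  unfolding gen_div_subring_def by (rule ds_Inter) auto

lemma gen_sub: "S \<subseteq> gen_div_subring S"
  unfolding gen_div_subring_def by auto

lemma gen_min: "division_subring E \<Longrightarrow> S \<subseteq> E \<Longrightarrow> gen_div_subring S \<subseteq> E"
  unfolding gen_div_subring_def by auto

lemma gen_mono: "S \<subseteq> T \<Longrightarrow> gen_div_subring S \<subseteq> gen_div_subring T"
  using gen_min[OF ds_gen] gen_sub by blast

lemma ds_UNIV: "division_subring (UNIV::'a::division_ring set)"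
  unfolding division_subring_def by auto

lemma ds_subring: "division_subring E \<Longrightarrow> subring E R0"
  by (rule R.subringI) (auto simp: division_subring_def)

lemma center_sub: "center E \<subseteq> E"
  unfolding center_def by auto

lemma units_R0: 
  assumes "\<And>x. x \<in> K \<Longrightarrow> inverse x \<in> K" "(0::'a::division_ring) \<in> K"
  shows "Units (R0\<lparr>carrier := K\<rparr>) = K - {0}"
proof -
  have "x \<in> Units (R0\<lparr>carrier := K\<rparr>)" if "x \<in> K" "x \<noteq> 0" for x
    unfolding Units_def using that assms
    by (auto intro!: bexI[where x="inverse x"] simp: right_inverse left_inverse)
  moreover have "x \<noteq> 0" if "x \<in> Units (R0\<lparr>carrier := K\<rparr>)" for x
    using that unfolding Units_def by auto
  moreover have "Units (R0\<lparr>carrier := K\<rparr>) \<subseteq> K"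
    unfolding Units_def by auto
  ultimately show ?thesis by blast
qed

lemma comm_subfield:
  fixes K :: "'a::division_ring set"
  assumes "0 \<in> K" "1 \<in> K" "\<And>x y. x \<in> K \<Longrightarrow> y \<in> K \<Longrightarrow> x + y \<in> K"
    "\<And>x y. x \<in> K \<Longrightarrow> y \<in> K \<Longrightarrow> x * y \<in> K"
    "\<And>x. x \<in> K \<Longrightarrow> - x \<in> K" "\<And>x. x \<in> K \<Longrightarrow> inverse x \<in> K"
    "\<And>x y. x \<in> K \<Longrightarrow> y \<in> K \<Longrightarrow> x * y = y * x"
  shows "subfield K R0"
proof (rule R.subfieldI)
  have "subring K R0"
  proof (rule R.subringI)
    show "K \<subseteq> carrier R0" by simp
    show "\<one>\<^bsub>R0\<^esub> \<in> K" using assms(2) by simp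
    show "\<ominus>\<^bsub>R0\<^esub> h \<in> K" if "h \<in> K" for h using assms(5)[OF that] by simp
    show "h1 \<otimes>\<^bsub>R0\<^esub> h2 \<in> K" if "h1 \<in> K" "h2 \<in> K" for h1 h2 using assms(4)[OF that] by simp
    show "h1 \<oplus>\<^bsub>R0\<^esub> h2 \<in> K" if "h1 \<in> K" "h2 \<in> K" for h1 h2 using assms(3)[OF that] by simp
  qed
  thus "subcring K R0"
    by (rule R.subcringI) (simp add: assms(7))
  show "Units (R0\<lparr>carrier := K\<rparr>) = K - {\<zero>\<^bsub>R0\<^esub>}"
    using units_R0[of K] assms(1,6) by simp
qed

lemma inv_comm: "x * y = y * x \<Longrightarrow> inverse x * y = y * inverse (x::'a::division_ring)"
proof (cases "x = 0")
  case False
  assume c: "x * y = y * x"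
  have "inverse x * y = inverse x * (y * x) * inverse x" using False by (simp add: mult.assoc)
  also have "\<dots> = inverse x * (x * y) * inverse x" using c by simp
  also have "\<dots> = y * inverse x" using False by (simp add: mult.assoc[symmetric])
  finally show ?thesis .
qed simp

lemma centerI: "x \<in> E \<Longrightarrow> (\<And>z. z \<in> E \<Longrightarrow> x * z = z * x) \<Longrightarrow> x \<in> center E"
  unfolding center_def by blast

lemma centerD: "x \<in> center E \<Longrightarrow> x \<in> E" "x \<in> center E \<Longrightarrow> z \<in> E \<Longrightarrow> x * z = z * x"
  unfolding center_def by blast+

lemma ds_center_subfield:
  assumes "division_subring E" shows "subfield (center E) R0"
proof (rule comm_subfield)
  note ds = assms[unfolded division_subring_def]
  show "0 \<in> center E" by (rule centerI) (use ds in auto)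
  show "1 \<in> center E" by (rule centerI) (use ds in auto)
  show "x + y \<in> center E" if "x \<in> center E" "y \<in> center E" for x y
  proof (rule centerI)
    show "x + y \<in> E" using ds centerD(1)[OF that(1)] centerD(1)[OF that(2)] by blast
    fix z assume "z \<in> E"
    have "x * z = z * x" "y * z = z * y" using centerD(2) that \<open>z \<in> E\<close> by blast+
    thus "(x + y) * z = z * (x + y)" by (simp add: distrib_left distrib_right)
  qed
  show "x * y \<in> center E" if "x \<in> center E" "y \<in> center E" for x y
  proof (rule centerI)
    show "x * y \<in> E" using ds centerD(1)[OF that(1)] centerD(1)[OF that(2)] by blast
    fix z assume "z \<in> E"
    have 1: "x * z = z * x" "y * z = z * y" using centerD(2) that \<open>z \<in> E\<close> by blast+
    have "x * y * z = x * (z * y)" using 1(2) by (simp add: mult.assoc)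
    also have "\<dots> = (x * z) * y" by (simp add: mult.assoc)
    also have "\<dots> = z * (x * y)" using 1(1) by (simp add: mult.assoc)
    finally show "x * y * z = z * (x * y)" .
  qed
  show "- x \<in> center E" if "x \<in> center E" for x
  proof (rule centerI)
    show "- x \<in> E" using ds centerD(1)[OF that] by blast
    fix z assume "z \<in> E"
    have "x * z = z * x" using centerD(2) that \<open>z \<in> E\<close> by blast
    thus "- x * z = z * - x" by simp
  qed
  show "inverse x \<in> center E" if "x \<in> center E" for x
  proof (rule centerI)
    show "inverse x \<in> E" using ds centerD(1)[OF that] by blast
    fix z assume "z \<in> E"
    have "x * z = z * x" using centerD(2) that \<open>z \<in> E\<close> by blast
    thus "inverse x * z = z * inverse x" by (rule inv_comm)
  qed
  show "x * y = y * x" if "x \<in> center E" "y \<in> center E" for x y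
    using centerD that by blast
qed

lemma Zc_subfield: "subfield (center (UNIV::'a::division_ring set)) R0"
  by (rule ds_center_subfield[OF ds_UNIV])

lemma ds_subalgebra:
  assumes "division_subring E" "K \<subseteq> E" shows "subalgebra K E R0"
proof -
  have "subring E R0" by (rule ds_subring[OF assms(1)])
  hence "subgroup E (add_monoid R0)" by (simp add: subring_def)
  thus ?thesis
    using assms unfolding subalgebra_def subalgebra_axioms_def division_subring_def by auto
qed

lemma comb_sum:
  fixes K :: "'a::division_ring set"
  assumes "set Ks \<subseteq> K" "0 \<in> K" "\<And>x y. x \<in> K \<Longrightarrow> y \<in> K \<Longrightarrow> x + y \<in> K"
  shows "\<exists>c. (\<forall>b. c b \<in> K) \<and> R.combine Ks Us = (\<Sum>b\<in>set Us. c b * b)"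
  using assms(1)
proof (induct Us arbitrary: Ks)
  case Nil
  have "R.combine Ks [] = 0" by (cases Ks) auto
  then show ?case using assms(2) by (intro exI[where x="\<lambda>_. 0"]) simp
next
  case (Cons u Us)
  show ?case
  proof (cases Ks)
    case Nil
    have "R.combine Ks (u # Us) = 0" using Nil by simp
    then show ?thesis using assms(2) by (intro exI[where x="\<lambda>_. 0"]) simp
  next
    case (Cons k Ks')
    have "set Ks' \<subseteq> K" using Cons.prems \<open>Ks = k # Ks'\<close> by auto
    from Cons.hyps[OF this] obtain c where c: "\<forall>b. c b \<in> K" "R.combine Ks' Us = (\<Sum>b\<in>set Us. c b * b)"
      by blast
    have k: "k \<in> K" using Cons.prems \<open>Ks = k # Ks'\<close> by auto
    have comb: "R.combine Ks (u # Us) = k * u + (\<Sum>b\<in>set Us. c b * b)"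
      using \<open>Ks = k # Ks'\<close> c(2) by simp
    show ?thesis
    proof (cases "u \<in> set Us")
      case True
      let ?c = "c(u := c u + k)"
      have fin: "finite (set Us)" by simp
      have s1: "(\<Sum>b\<in>set Us. ?c b * b) = ?c u * u + (\<Sum>b\<in>set Us - {u}. ?c b * b)"
        by (rule sum.remove[OF fin True])
      have s2: "(\<Sum>b\<in>set Us - {u}. ?c b * b) = (\<Sum>b\<in>set Us - {u}. c b * b)"
        by (rule sum.cong) auto
      have s3: "(\<Sum>b\<in>set Us. c b * b) = c u * u + (\<Sum>b\<in>set Us - {u}. c b * b)"
        by (rule sum.remove[OF fin True])
      have "(\<Sum>b\<in>set Us. ?c b * b) = k * u + (\<Sum>b\<in>set Us. c b * b)"
        unfolding s1 s2 s3 by (simp add: algebra_simps)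
      moreover have "set (u # Us) = set Us" using True by auto
      ultimately have "R.combine Ks (u # Us) = (\<Sum>b\<in>set (u # Us). ?c b * b)"
        using comb by (metis (no_types))
      moreover have "\<forall>b. ?c b \<in> K" using c(1) k assms(3) by simp
      ultimately show ?thesis by blast
    next
      case False
      let ?c = "c(u := k)"
      have e1: "(\<Sum>b\<in>set Us. ?c b * b) = (\<Sum>b\<in>set Us. c b * b)"
        by (rule sum.cong) (use False in auto)
      have e2: "(\<Sum>b\<in>set (u # Us). ?c b * b) = k * u + (\<Sum>b\<in>set Us. ?c b * b)"
        using False by simp
      have "R.combine Ks (u # Us) = (\<Sum>b\<in>set (u # Us). ?c b * b)"
        unfolding comb e2 e1 ..
      moreover have "\<forall>b. ?c b \<in> K" using c(1) k by simp
      ultimately show ?thesis by blast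
    qed
  qed
qed

lemma sum_in_Span:
  fixes K :: "'a::division_ring set"
  assumes "subfield K R0" "\<And>b. b \<in> B \<Longrightarrow> c b \<in> K" "B \<subseteq> set Us"
  shows "(\<Sum>b\<in>B. c b * b) \<in> R.Span K Us"
proof -
  have cr: "set Us \<subseteq> carrier R0" by simp
  have "finite B" using assms(3) finite_subset by blast
  thus ?thesis using assms(2,3)
  proof (induct B)
    case empty
    have "\<zero>\<^bsub>R0\<^esub> \<in> R.Span K Us" by (rule R.Span_subgroup_props(2)[OF assms(1) cr])
    then show ?case by simp
  next
    case (insert x F)
    have xU: "x \<in> set Us" using insert.prems(2) by blast
    have "x \<in> R.Span K Us" using xU R.Span_base_incl[OF assms(1) cr] by blast
    moreover have "c x \<in> K" using insert.prems(1) by blast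
    ultimately have "c x \<otimes>\<^bsub>R0\<^esub> x \<in> R.Span K Us"
      using R.Span_smult_closed[OF assms(1) cr] by blast
    moreover have "(\<Sum>b\<in>F. c b * b) \<in> R.Span K Us"
      using insert.hyps(3) insert.prems by blast
    ultimately have "c x * x \<oplus>\<^bsub>R0\<^esub> (\<Sum>b\<in>F. c b * b) \<in> R.Span K Us"
      using R.Span_subgroup_props(3)[OF assms(1) cr] by simp
    thus ?case using insert.hyps(2) insert.hyps(1) by simp
  qed
qed


lemma fd_to:
  fixes K :: "'a::division_ring set"
  assumes "subfield K R0" "K \<subseteq> E" "division_subring E" "fin_dim_over K E"
  shows "R.finite_dimension K E"
proof -
  obtain B where B: "finite B" "B \<subseteq> E" "\<forall>a\<in>E. \<exists>c. (\<forall>b\<in>B. c b \<in> K) \<and> a = (\<Sum>b\<in>B. c b * b)"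
    using assms(4) unfolding fin_dim_over_def by blast
  obtain Us where Us: "set Us = B" using finite_list[OF B(1)] by blast
  have "E \<subseteq> R.Span K Us"
  proof
    fix a assume "a \<in> E"
    then obtain c where "\<forall>b\<in>B. c b \<in> K" "a = (\<Sum>b\<in>B. c b * b)" using B by blast
    thus "a \<in> R.Span K Us" using sum_in_Span[OF assms(1), of B c Us] Us by auto
  qed
  moreover have "R.Span K Us \<subseteq> E"
    by (rule R.subalgebra_Span_incl[OF assms(1) ds_subalgebra[OF assms(3,2)]]) (use Us B in simp)
  ultimately have "E = R.Span K Us" by (rule antisym)
  thus ?thesis using R.Span_finite_dimension[OF assms(1), of Us] by simp
qed

lemma fd_from:
  fixes K :: "'a::division_ring set"
  assumes "subfield K R0" "R.finite_dimension K E"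
  shows "fin_dim_over K E"
proof -
  obtain n where "R.dimension n K E" using assms(2) by auto
  then obtain Vs where Vs: "R.Span K Vs = E"
    using R.exists_base[OF assms(1)] by blast
  have sub: "set Vs \<subseteq> E" using R.Span_base_incl[OF assms(1), of Vs] Vs by simp
  have K0: "0 \<in> K" and Kadd: "\<And>x y. x \<in> K \<Longrightarrow> y \<in> K \<Longrightarrow> x + y \<in> K"
    using subringE(2,7)[OF subfieldE(1)[OF assms(1)]] by auto
  show ?thesis unfolding fin_dim_over_def
  proof (rule exI[of _ "set Vs"], intro conjI ballI)
    show "finite (set Vs)" by simp
    show "set Vs \<subseteq> E" by (rule sub)
    fix a assume "a \<in> E"
    then obtain Ks where "set Ks \<subseteq> K" "a = R.combine Ks Vs"
      using R.Span_mem_iff_length_version[where Us=Vs and K=K and a=a] Vs assms(1) by auto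
    then obtain c where c1: "\<forall>b. c b \<in> K" and c2: "a = (\<Sum>b\<in>set Vs. c b * b)"
      using comb_sum[of Ks K Vs] K0 Kadd by auto
    show "\<exists>c. (\<forall>b\<in>set Vs. c b \<in> K) \<and> a = (\<Sum>b\<in>set Vs. c b * b)"
      using [[show_types]] by (intro exI[of _ c] conjI) (use c1 c2 in auto)
  qed
qed

lemma comb_exp:
  "length Ks = m \<Longrightarrow> R.combine Ks (R.exp_base x m) = (\<Sum>i<m. rev Ks ! i * (x::'a::division_ring) ^ i)"
proof (induct Ks arbitrary: m)
  case Nil
  then show ?case by (simp add: R.exp_base_def)
next
  case (Cons k Ks)
  then obtain m' where m: "m = Suc m'" "length Ks = m'" by auto
  have "R.exp_base x m = x ^ m' # R.exp_base x m'" using m by (simp add: R.exp_base_def)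
  hence "R.combine (k # Ks) (R.exp_base x m) = k * x ^ m' + (\<Sum>i<m'. rev Ks ! i * x ^ i)"
    using Cons m by simp
  also have "(\<Sum>i<m'. rev Ks ! i * x ^ i) = (\<Sum>i<m'. rev (k # Ks) ! i * x ^ i)"
    by (rule sum.cong) (auto simp: nth_append m)
  also have "k * x ^ m' + \<dots> = (\<Sum>i<m. rev (k # Ks) ! i * x ^ i)"
    using m by (simp add: nth_append add.commute)
  finally show ?case .
qed

lemma ds_pow: "division_subring E \<Longrightarrow> x \<in> E \<Longrightarrow> x ^ n \<in> E"
  by (induct n) (auto simp: division_subring_def)

lemma lf_alg:
  assumes "locally_finite TYPE('a::division_ring)"
  shows "algebraic_over (center UNIV) (x::'a)"
proof -
  let ?Z = "center (UNIV::'a set)"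
  let ?E = "gen_div_subring (?Z \<union> {x})"
  have Zs: "subfield ?Z R0" by (rule Zc_subfield)
  have ds: "division_subring ?E" by (rule ds_gen)
  have ZE: "?Z \<subseteq> ?E" "x \<in> ?E" using gen_sub[of "?Z \<union> {x}"] by auto
  have "fin_dim_over ?Z ?E" using assms unfolding locally_finite_def by auto
  hence "R.finite_dimension ?Z ?E" using fd_to[OF Zs ZE(1) ds] by blast
  then obtain n where n: "R.dimension n ?Z ?E" by auto
  let ?Us = "R.exp_base x (Suc n)"
  have sU: "set ?Us \<subseteq> ?E" using ds_pow[OF ds ZE(2)] by (auto simp: R.exp_base_def)
  have "\<not> R.independent ?Z ?Us"
    using R.independent_length_le_dimension[OF Zs n _ sU] by (auto simp: R.exp_base_def)
  then obtain Ks where Ks: "length Ks = Suc n" "R.combine Ks ?Us = 0" "set Ks \<subseteq> ?Z" "set Ks \<noteq> {0}"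
    using R.dependent_imp_non_trivial_combine[OF Zs, of ?Us] by (auto simp: R.exp_base_def)
  define c where "c i = rev Ks ! i" for i
  have sum0: "(\<Sum>i\<le>n. c i * x ^ i) = 0"
    using comb_exp[OF Ks(1), of x] Ks(2) unfolding c_def by (simp add: lessThan_Suc_atMost)
  have cZ: "\<forall>i\<le>n. c i \<in> ?Z"
  proof (intro allI impI)
    fix i assume "i \<le> n"
    hence "c i \<in> set (rev Ks)" unfolding c_def using Ks(1) by (intro nth_mem) simp
    thus "c i \<in> ?Z" using Ks(3) by auto
  qed
  have "\<exists>i\<le>n. c i \<noteq> 0"
  proof -
    have "set Ks \<noteq> {}" using Ks(1) by auto
    have "\<exists>y\<in>set Ks. y \<noteq> 0"
    proof (rule ccontr)
      assume "\<not> (\<exists>y\<in>set Ks. y \<noteq> 0)"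
      hence "set Ks \<subseteq> {0}" by auto
      with \<open>set Ks \<noteq> {}\<close> have "set Ks = {0}" using subset_singleton_iff by metis
      with Ks(4) show False by simp
    qed
    then obtain y where y: "y \<in> set Ks" "y \<noteq> 0" by blast
    then obtain i where "i < length (rev Ks)" "rev Ks ! i = y"
      by (metis in_set_conv_nth set_rev)
    thus ?thesis using y Ks(1) unfolding c_def by (intro exI[of _ i]) auto
  qed
  thus ?thesis unfolding algebraic_over_def using cZ sum0 by blast
qed

lemma comb_gen:
  "R.combine Ks Us = (\<Sum>i<length Us. (if i < length Ks then Ks ! i else 0) * (Us ! i :: 'a::division_ring))"
proof (induct Us arbitrary: Ks)
  case Nil
  then show ?case by (cases Ks) auto
next
  case (Cons u Us)
  show ?case
  proof (cases Ks)
    case Nil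
    then show ?thesis by simp
  next
    case (Cons k Ks')
    have "R.combine (k # Ks') (u # Us) = k * u + R.combine Ks' Us" by simp
    also have "\<dots> = k * u + (\<Sum>i<length Us. (if i < length Ks' then Ks' ! i else 0) * Us ! i)"
      using Cons.hyps by simp
    also have "\<dots> = (\<Sum>i<length (u # Us). (if i < length (k # Ks') then (k # Ks') ! i else 0) * (u # Us) ! i)"
      unfolding length_Cons sum.lessThan_Suc_shift by (simp cong: if_cong)
    finally show ?thesis unfolding \<open>Ks = k # Ks'\<close> .
  qed
qed

definition indep_sum :: "'a::division_ring set \<Rightarrow> (nat \<Rightarrow> 'a) \<Rightarrow> nat \<Rightarrow> bool" where
  "indep_sum K u m \<longleftrightarrow> (\<forall>f. (\<forall>i<m. f i \<in> K) \<longrightarrow> (\<Sum>i<m. f i * u i) = 0 \<longrightarrow> (\<forall>i<m. f i = 0))"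

lemma indep_iff:
  fixes K :: "'a::division_ring set"
  assumes K: "subfield K R0"
  shows "R.independent K Us \<longleftrightarrow> indep_sum K (\<lambda>i. Us ! i) (length Us)"
proof
  assume ind: "R.independent K Us"
  show "indep_sum K (\<lambda>i. Us ! i) (length Us)" unfolding indep_sum_def
  proof (intro allI impI)
    fix f i assume f: "\<forall>i<length Us. f i \<in> K" "(\<Sum>i<length Us. f i * Us ! i) = 0" "i < length Us"
    let ?Ks = "map f [0..<length Us]"
    have "R.combine ?Ks Us = (\<Sum>i<length Us. f i * Us ! i)"
      unfolding comb_gen by (rule sum.cong) auto
    hence "R.combine ?Ks Us = \<zero>\<^bsub>R0\<^esub>" using f(2) by simp
    moreover have "set ?Ks \<subseteq> K" using f(1) by auto
    ultimately have "set (take (length Us) ?Ks) \<subseteq> {\<zero>\<^bsub>R0\<^esub>}"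
      using R.independent_imp_trivial_combine[OF K ind] by blast
    moreover have "f i \<in> set (take (length Us) ?Ks)"
    proof -
      have "i \<in> {0..<length Us}" using f(3) by simp
      hence "f i \<in> f ` {0..<length Us}" by (rule imageI)
      thus ?thesis by simp
    qed
    ultimately show "f i = 0" by auto
  qed
next
  assume ind: "indep_sum K (\<lambda>i. Us ! i) (length Us)"
  have K0: "0 \<in> K" using subringE(2)[OF subfieldE(1)[OF K]] by simp
  show "R.independent K Us"
  proof (rule R.trivial_combine_imp_independent[OF K])
    show "set Us \<subseteq> carrier R0" by simp
    fix Ks assume Ks: "set Ks \<subseteq> K" "R.combine Ks Us = \<zero>\<^bsub>R0\<^esub>"
    define f where "f i = (if i < length Ks then Ks ! i else 0)" for i
    have "\<forall>i<length Us. f i \<in> K" using Ks(1) K0 unfolding f_def by auto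
    moreover have "(\<Sum>i<length Us. f i * Us ! i) = 0" using Ks(2) unfolding comb_gen f_def by simp
    ultimately have f0: "\<forall>i<length Us. f i = 0" using ind unfolding indep_sum_def by blast
    show "set (take (length Us) Ks) \<subseteq> {\<zero>\<^bsub>R0\<^esub>}"
    proof
      fix y assume "y \<in> set (take (length Us) Ks)"
      then obtain i where "i < length (take (length Us) Ks)" "take (length Us) Ks ! i = y"
        by (metis in_set_conv_nth)
      hence "i < length Us" "i < length Ks" "Ks ! i = y" by auto
      thus "y \<in> {\<zero>\<^bsub>R0\<^esub>}" using f0 unfolding f_def by auto
    qed
  qed
qed

lemma filter_base':
  fixes K :: "'a::division_ring set"
  assumes K: "subfield K R0"
  shows "\<exists>Vs. set Vs \<subseteq> set Us \<and> R.independent K Vs \<and> R.Span K Vs = R.Span K Us"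
proof (induct Us)
  case Nil
  then show ?case by auto
next
  case (Cons u Us)
  then obtain Vs where Vs: "set Vs \<subseteq> set Us" "R.independent K Vs" "R.Span K Vs = R.Span K Us"
    by auto
  show ?case
  proof (cases "u \<in> R.Span K Us")
    case True
    have "R.Span K (u # Us) = R.Span K Us"
    proof
      have "set (u # Us) \<subseteq> R.Span K Us" using True R.Span_base_incl[OF K, of Us] by auto
      thus "R.Span K (u # Us) \<subseteq> R.Span K Us" using R.mono_Span_subset[OF K] by simp
      show "R.Span K Us \<subseteq> R.Span K (u # Us)" using R.mono_Span[OF K] by simp
    qed
    thus ?thesis using Vs by auto
  next
    case False
    have "R.Span K (u # Vs) = R.Span K (u # Us)" using Vs(3) by (simp add: R.Span.simps)
    moreover have "R.independent K (u # Vs)"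
      using R.li_Cons[of u K Vs] False Vs by simp
    ultimately show ?thesis using Vs(1) by (intro exI[of _ "u # Vs"]) auto
  qed
qed

lemma ds_sum:
  assumes "division_subring D" "\<And>i. i \<in> A \<Longrightarrow> g i \<in> D"
  shows "sum g A \<in> D"
proof (cases "finite A")
  case True
  thus ?thesis using assms(2)
  proof (induct A)
    case empty
    then show ?case using assms(1) by (simp add: division_subring_def)
  next
    case (insert x F)
    hence "g x \<in> D" "sum g F \<in> D" by auto
    thus ?case using insert.hyps assms(1) by (simp add: division_subring_def)
  qed
next
  case False
  then show ?thesis using assms(1) by (simp add: division_subring_def)
qed

lemma key_aux:
  fixes D :: "'a::division_ring set"
  assumes ds: "division_subring D"
    and cc: "\<And>j d. j < p \<Longrightarrow> d \<in> D \<Longrightarrow> c j * d = d * c j"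
    and ind: "indep_sum (center D) c p"
  shows "\<forall>\<delta>. card {j. j < p \<and> \<delta> j \<noteq> 0} = N \<longrightarrow> (\<forall>j<p. \<delta> j \<in> D) \<longrightarrow>
            (\<Sum>j<p. \<delta> j * c j) = 0 \<longrightarrow> (\<forall>j<p. \<delta> j = 0)"
proof (induct N rule: less_induct)
  case (less N)
  note dsd = ds[unfolded division_subring_def]
  show ?case
  proof (rule allI, intro impI)
    fix \<delta> assume cardN: "card {j. j < p \<and> \<delta> j \<noteq> 0} = N" and \<delta>D: "\<forall>j<p. \<delta> j \<in> D"
      and s0: "(\<Sum>j<p. \<delta> j * c j) = 0"
    show "\<forall>j<p. \<delta> j = 0"
    proof (rule ccontr)
      assume "\<not> (\<forall>j<p. \<delta> j = 0)"
      then obtain j0 where j0: "j0 < p" "\<delta> j0 \<noteq> 0" by auto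
      define \<delta>' where "\<delta>' j = inverse (\<delta> j0) * \<delta> j" for j
      have \<delta>'D: "\<delta>' j \<in> D" if "j < p" for j
        using dsd \<delta>D that j0(1) unfolding \<delta>'_def by blast
      have s': "(\<Sum>j<p. \<delta>' j * c j) = 0"
      proof -
        have "(\<Sum>j<p. \<delta>' j * c j) = inverse (\<delta> j0) * (\<Sum>j<p. \<delta> j * c j)"
          unfolding sum_distrib_left \<delta>'_def by (simp add: mult.assoc)
        thus ?thesis using s0 by simp
      qed
      have \<delta>'1: "\<delta>' j0 = 1" using j0 by (simp add: \<delta>'_def)
      have \<delta>'0: "\<delta>' j = 0 \<longleftrightarrow> \<delta> j = 0" for j
        using j0(2) by (simp add: \<delta>'_def)
      have comm: "x * \<delta>' j = \<delta>' j * x" if x: "x \<in> D" and j: "j < p" for x j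
      proof -
        define \<epsilon> where "\<epsilon> i = x * \<delta>' i - \<delta>' i * x" for i
        have \<epsilon>D: "\<forall>i<p. \<epsilon> i \<in> D"
        proof (intro allI impI)
          fix i assume "i < p"
          hence "x * \<delta>' i \<in> D" "\<delta>' i * x \<in> D" using dsd x \<delta>'D by blast+
          hence "x * \<delta>' i + - (\<delta>' i * x) \<in> D" using dsd by blast
          thus "\<epsilon> i \<in> D" unfolding \<epsilon>_def by simp
        qed
        have e: "\<epsilon> i * c i = x * (\<delta>' i * c i) - (\<delta>' i * c i) * x" if "i < p" for i
        proof -
          have "\<delta>' i * x * c i = \<delta>' i * (x * c i)" by (simp add: mult.assoc)
          also have "\<dots> = \<delta>' i * (c i * x)" by (simp only: cc[OF that x])
          also have "\<dots> = \<delta>' i * c i * x" by (simp add: mult.assoc)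
          finally have f: "\<delta>' i * x * c i = \<delta>' i * c i * x" .
          have "\<epsilon> i * c i = x * \<delta>' i * c i - \<delta>' i * x * c i"
            unfolding \<epsilon>_def by (simp add: left_diff_distrib)
          also have "\<dots> = x * (\<delta>' i * c i) - \<delta>' i * c i * x"
            unfolding f by (simp add: mult.assoc)
          finally show ?thesis .
        qed
        have "(\<Sum>i<p. \<epsilon> i * c i) = (\<Sum>i<p. x * (\<delta>' i * c i) - (\<delta>' i * c i) * x)"
          by (rule sum.cong) (simp_all add: e)
        also have "\<dots> = x * (\<Sum>i<p. \<delta>' i * c i) - (\<Sum>i<p. \<delta>' i * c i) * x"
          by (simp add: sum_subtractf sum_distrib_left sum_distrib_right)
        finally have se: "(\<Sum>i<p. \<epsilon> i * c i) = 0" using s' by simp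
        have sub: "{i. i < p \<and> \<epsilon> i \<noteq> 0} \<subseteq> {i. i < p \<and> \<delta> i \<noteq> 0} - {j0}"
        proof
          fix i assume "i \<in> {i. i < p \<and> \<epsilon> i \<noteq> 0}"
          hence i: "i < p" "\<epsilon> i \<noteq> 0" by auto
          have "i \<noteq> j0" using i(2) \<delta>'1 unfolding \<epsilon>_def by auto
          moreover have "\<delta> i \<noteq> 0" using i(2) \<delta>'0[of i] unfolding \<epsilon>_def by auto
          ultimately show "i \<in> {i. i < p \<and> \<delta> i \<noteq> 0} - {j0}" using i(1) by auto
        qed
        have "card {i. i < p \<and> \<epsilon> i \<noteq> 0} < N"
        proof -
          have "{i. i < p \<and> \<epsilon> i \<noteq> 0} \<subset> {i. i < p \<and> \<delta> i \<noteq> 0}"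
            using sub j0 by blast
          moreover have "finite {i. i < p \<and> \<delta> i \<noteq> 0}" by simp
          ultimately show ?thesis using cardN psubset_card_mono by blast
        qed
        hence "\<forall>i<p. \<epsilon> i = 0" using less \<epsilon>D se by blast
        thus ?thesis using j unfolding \<epsilon>_def by simp
      qed
      have "\<forall>j<p. \<delta>' j \<in> center D"
      proof (intro allI impI)
        fix j assume "j < p"
        show "\<delta>' j \<in> center D"
          by (rule centerI) (use \<delta>'D[OF \<open>j < p\<close>] comm[OF _ \<open>j < p\<close>] in auto)
      qed
      hence "\<forall>j<p. \<delta>' j = 0" using ind s' unfolding indep_sum_def by blast
      thus False using \<delta>'1 j0(1) by auto
    qed
  qed
qed

lemma key:
  fixes D :: "'a::division_ring set"
  assumes ds: "division_subring D"
    and cc: "\<And>j d. j < p \<Longrightarrow> d \<in> D \<Longrightarrow> c j * d = d * c j"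
    and ind: "indep_sum (center D) c p"
    and "\<forall>j<p. \<delta> j \<in> D" "(\<Sum>j<p. \<delta> j * c j) = 0"
  shows "\<forall>j<p. \<delta> j = 0"
  using key_aux[OF ds cc ind, of "card {j. j < p \<and> \<delta> j \<noteq> 0}"] assms(4,5) by blast

lemma transfer_indep:
  fixes D :: "'a::division_ring set"
  assumes ds: "division_subring D" and uD: "\<forall>i<m. u i \<in> D"
    and indF: "indep_sum (center D) u m"
  shows "indep_sum (center UNIV) u m"
  unfolding indep_sum_def
proof (rule allI, intro impI)
  fix k assume kZ: "\<forall>i<m. k i \<in> center UNIV" and sk: "(\<Sum>i<m. k i * u i) = 0"
  let ?F = "center D"
  have sF: "subfield ?F R0" by (rule ds_center_subfield[OF ds])
  have FD: "?F \<subseteq> D" by (rule center_sub)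
  let ?Ks = "map k [0..<m]"
  obtain Cs where Cs: "set Cs \<subseteq> set ?Ks" "R.independent ?F Cs" "R.Span ?F Cs = R.Span ?F ?Ks"
    using filter_base'[OF sF] by blast
  define p where "p = length Cs"
  define c where "c j = Cs ! j" for j
  have cZ: "c j \<in> center UNIV" if "j < p" for j
  proof -
    have "c j \<in> set Cs" unfolding c_def using that p_def by simp
    hence "c j \<in> set ?Ks" using Cs(1) by blast
    then obtain i where "i < m" "c j = k i" by auto
    thus ?thesis using kZ by auto
  qed
  have cc: "c j * d = d * c j" if "j < p" for j d
    using cZ[OF that] unfolding center_def by auto
  have indc: "indep_sum ?F c p"
    using Cs(2) indep_iff[OF sF, of Cs] unfolding c_def p_def by simp
  have "\<forall>i. \<exists>Fs. i < m \<longrightarrow> set Fs \<subseteq> ?F \<and> length Fs = p \<and> k i = R.combine Fs Cs"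
  proof (intro allI)
    fix i
    show "\<exists>Fs. i < m \<longrightarrow> set Fs \<subseteq> ?F \<and> length Fs = p \<and> k i = R.combine Fs Cs"
    proof (cases "i < m")
      case True
      have "k i \<in> set ?Ks" using True by simp
      hence "k i \<in> R.Span ?F ?Ks" using R.Span_base_incl[OF sF, of ?Ks] by auto
      hence "k i \<in> R.Span ?F Cs" using Cs(3) by simp
      hence "\<exists>Fs. set Fs \<subseteq> ?F \<and> length Fs = length Cs \<and> k i = R.combine Fs Cs"
        using R.Span_mem_iff_length_version[OF sF, of Cs "k i"] by simp
      thus ?thesis unfolding p_def by blast
    qed simp
  qed
  from choice[OF this] obtain G where G0: "\<forall>i. i < m \<longrightarrow> set (G i) \<subseteq> ?F \<and> length (G i) = p \<and> k i = R.combine (G i) Cs"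
    by blast
  have G: "set (G i) \<subseteq> ?F \<and> length (G i) = p \<and> k i = R.combine (G i) Cs" if "i < m" for i
    using G0 that by blast
  define f where "f i j = G i ! j" for i j
  have fF: "f i j \<in> ?F" if "i < m" "j < p" for i j
    using G[OF that(1)] that(2) unfolding f_def by auto
  have kf: "k i = (\<Sum>j<p. f i j * c j)" if "i < m" for i
  proof -
    have "k i = R.combine (G i) Cs" using G[OF that] by blast
    also have "\<dots> = (\<Sum>j<p. f i j * c j)"
      unfolding comb_gen p_def[symmetric] by (rule sum.cong) (use G[OF that] in \<open>simp_all add: f_def c_def\<close>)
    finally show ?thesis .
  qed
  define \<delta> where "\<delta> j = (\<Sum>i<m. f i j * u i)" for j
  have "(\<Sum>i<m. k i * u i) = (\<Sum>i<m. \<Sum>j<p. f i j * c j * u i)"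
    by (rule sum.cong) (simp_all add: kf sum_distrib_right)
  also have "\<dots> = (\<Sum>i<m. \<Sum>j<p. f i j * u i * c j)"
  proof (intro sum.cong refl)
    fix i j assume "j \<in> {..<p}"
    hence "c j * u i = u i * c j" using cc by simp
    thus "f i j * c j * u i = f i j * u i * c j" by (simp add: mult.assoc)
  qed
  also have "\<dots> = (\<Sum>j<p. \<delta> j * c j)"
    unfolding \<delta>_def sum_distrib_right by (rule sum.swap)
  finally have s\<delta>: "(\<Sum>j<p. \<delta> j * c j) = 0" using sk by simp
  have \<delta>D: "\<forall>j<p. \<delta> j \<in> D"
  proof (intro allI impI)
    fix j assume "j < p"
    show "\<delta> j \<in> D" unfolding \<delta>_def
    proof (rule ds_sum[OF ds])
      fix i assume "i \<in> {..<m}"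
      hence i: "i < m" by simp
      have "f i j \<in> D" using fF[OF i \<open>j < p\<close>] FD by blast
      moreover have "u i \<in> D" using uD i by blast
      ultimately show "f i j * u i \<in> D" using ds unfolding division_subring_def by simp
    qed
  qed
  have \<delta>0: "\<forall>j<p. \<delta> j = 0" by (rule key[OF ds cc indc \<delta>D s\<delta>])
  have f0: "f i j = 0" if "i < m" "j < p" for i j
  proof -
    have a1: "\<forall>i<m. f i j \<in> ?F" using fF that(2) by simp
    have a2: "(\<Sum>i<m. f i j * u i) = 0" using \<delta>0 that(2) unfolding \<delta>_def by simp
    have H: "(\<forall>i<m. f i j \<in> ?F) \<longrightarrow> (\<Sum>i<m. f i j * u i) = 0 \<longrightarrow> (\<forall>i<m. f i j = 0)"
      by (rule spec[OF indF[unfolded indep_sum_def]])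
    have "\<forall>i<m. f i j = 0" using mp[OF mp[OF H a1] a2] .
    thus ?thesis using that(1) by blast
  qed
  show "\<forall>i<m. k i = 0"
  proof (intro allI impI)
    fix i assume "i < m"
    have "k i = (\<Sum>j<p. f i j * c j)" by (rule kf[OF \<open>i < m\<close>])
    also have "\<dots> = (\<Sum>j<p. 0)" by (rule sum.cong) (simp_all add: f0[OF \<open>i < m\<close>])
    finally show "k i = 0" by simp
  qed
qed

lemma lf_wlf:
  assumes lf: "locally_finite TYPE('a::division_ring)" and fin: "finite (S::'a set)"
  shows "fin_dim_over (center (gen_div_subring S)) (gen_div_subring S)"
proof -
  let ?Z = "center (UNIV::'a set)"
  let ?L = "gen_div_subring (?Z \<union> S)"
  let ?D = "gen_div_subring S"
  let ?F = "center ?D"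
  have Zs: "subfield ?Z R0" by (rule Zc_subfield)
  have dsL: "division_subring ?L" and dsD: "division_subring ?D" by (rule ds_gen)+
  have ZL: "?Z \<subseteq> ?L" using gen_sub[of "?Z \<union> S"] by auto
  have DL: "?D \<subseteq> ?L" by (rule gen_mono) auto
  have sF: "subfield ?F R0" by (rule ds_center_subfield[OF dsD])
  have FD: "?F \<subseteq> ?D" by (rule center_sub)
  have "fin_dim_over ?Z ?L" using lf fin unfolding locally_finite_def by auto
  hence "R.finite_dimension ?Z ?L" using fd_to[OF Zs ZL dsL] by blast
  then obtain n where n: "R.dimension n ?Z ?L" by auto
  have bound: "length Us \<le> n" if "set Us \<subseteq> ?D" "R.independent ?F Us" for Us
  proof -
    have "indep_sum ?F (\<lambda>i. Us ! i) (length Us)" using that(2) indep_iff[OF sF] by blast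
    moreover have "\<forall>i<length Us. Us ! i \<in> ?D" using that(1) by auto
    ultimately have "indep_sum ?Z (\<lambda>i. Us ! i) (length Us)"
      using transfer_indep[OF dsD] by blast
    hence "R.independent ?Z Us" using indep_iff[OF Zs] by blast
    moreover have "set Us \<subseteq> ?L" using that(1) DL by blast
    ultimately show ?thesis using R.independent_length_le_dimension[OF Zs n] by blast
  qed
  define SS where "SS = {Us. set Us \<subseteq> ?D \<and> R.independent ?F Us}"
  have "length ` SS \<subseteq> {..n}" unfolding SS_def using bound by auto
  hence finl: "finite (length ` SS)" using finite_subset by blast
  have "[] \<in> SS" unfolding SS_def by simp
  hence ne: "length ` SS \<noteq> {}" by blast
  define m where "m = Max (length ` SS)"
  have "m \<in> length ` SS" unfolding m_def using Max_in[OF finl ne] .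
  then obtain Us where Us: "set Us \<subseteq> ?D" "R.independent ?F Us" "length Us = m"
    unfolding SS_def by auto
  have great: "length Vs \<le> m" if "Vs \<in> SS" for Vs
    unfolding m_def using Max_ge[OF finl] that by blast
  have "R.Span ?F Us = ?D"
  proof
    show "R.Span ?F Us \<subseteq> ?D"
      by (rule R.subalgebra_Span_incl[OF sF ds_subalgebra[OF dsD FD] Us(1)])
    show "?D \<subseteq> R.Span ?F Us"
    proof
      fix v assume v: "v \<in> ?D"
      show "v \<in> R.Span ?F Us"
      proof (rule ccontr)
        assume "v \<notin> R.Span ?F Us"
        hence "R.independent ?F (v # Us)" using R.li_Cons[OF _ _ Us(2)] by simp
        hence "v # Us \<in> SS" unfolding SS_def using v Us(1) by auto
        hence "length (v # Us) \<le> m" by (rule great)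
        thus False using Us(3) by simp
      qed
    qed
  qed
  hence "R.finite_dimension ?F ?D" using R.Span_finite_dimension[OF sF, of Us] by simp
  thus ?thesis by (rule fd_from[OF sF])
qed

lemma alg_conv:
  assumes "algebraic_over K (x::'a::division_ring)"
  shows "(R.algebraic over K) x"
proof -
  obtain n c where c: "\<forall>i\<le>n. c i \<in> K" "\<exists>i\<le>n. c i \<noteq> 0" "(\<Sum>i\<le>n. c i * x ^ i) = 0"
    using assms unfolding algebraic_over_def by blast
  define Ks where "Ks = rev (map c [0..<Suc n])"
  have lK: "length Ks = Suc n" unfolding Ks_def by simp
  have "R.eval Ks x = R.combine Ks (R.exp_base x (length Ks))"
    by (rule R.combine_eq_eval[symmetric])
  also have "\<dots> = (\<Sum>i<Suc n. rev Ks ! i * x ^ i)" using comb_exp[OF lK] lK by simp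
  also have "\<dots> = (\<Sum>i<Suc n. c i * x ^ i)"
    by (rule sum.cong) (auto simp: Ks_def nth_append simp del: upt_Suc)
  also have "\<dots> = 0" using c(3) by (simp add: lessThan_Suc_atMost)
  finally have ev: "R.eval Ks x = 0" .
  have sK: "set Ks \<subseteq> K" using c(1) unfolding Ks_def by auto
  have "R.eval (R.normalize Ks) x = R.eval Ks x"
    by (rule R.eval_normalize) simp_all
  hence ev': "R.eval (R.normalize Ks) x = \<zero>\<^bsub>R0\<^esub>" using ev by simp
  have "R.normalize Ks \<noteq> []"
  proof
    assume "R.normalize Ks = []"
    hence "Ks = replicate (length Ks - 0) \<zero>\<^bsub>R0\<^esub>"
      using R.normalize_trick[of Ks] by simp
    hence "set Ks \<subseteq> {0}" by (metis R0_simps(4) set_replicate_conv_if empty_subsetI order_refl)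
    moreover obtain i where "i \<le> n" "c i \<noteq> 0" using c(2) by blast
    moreover have "c i \<in> set Ks" using \<open>i \<le> n\<close> unfolding Ks_def set_rev set_map set_upt by auto
    ultimately show False by auto
  qed
  moreover have "R.normalize Ks \<in> carrier (K[X]\<^bsub>R0\<^esub>)"
    using R.normalize_gives_polynomial[OF sK] unfolding univ_poly_def by auto
  ultimately show ?thesis using R.algebraicI ev' by blast
qed

lemma comb_in_sub:
  assumes "subalgebra K V R0" "set Ks \<subseteq> K" "set Us \<subseteq> V"
  shows "R.combine Ks Us \<in> V"
  using assms(2,3)
proof (induct Ks Us rule: R.combine.induct)
  case (1 k Ks u Us)
  have "k \<otimes>\<^bsub>R0\<^esub> u \<in> V" using subalgebra.smult_closed[OF assms(1)] 1 by auto
  moreover have "R.combine Ks Us \<in> V" using 1 by auto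
  ultimately show ?case
    using subgroup.m_closed[OF subalgebra.axioms(1)[OF assms(1)]] by simp
qed (use subgroup.one_closed[OF subalgebra.axioms(1)[OF assms(1)]] in simp_all)

lemma comb_map_mult:
  assumes "\<forall>k\<in>set Ks. k * x = x * k"
  shows "R.combine Ks (map (\<lambda>v. x * v) Vs) = x * R.combine Ks (Vs::'a::division_ring list)"
  using assms
proof (induct Ks Vs rule: R.combine.induct)
  case (1 k Ks u Us)
  have "k * (x * u) = x * (k * u)" using 1(2) by (simp add: mult.assoc[symmetric])
  thus ?case using 1 by (simp add: distrib_left)
qed simp_all

lemma centralizer_ds: "division_subring {a::'a::division_ring. \<forall>d\<in>Xs. a * d = d * a}"
  unfolding division_subring_def
proof (intro conjI ballI)
  show "0 \<in> {a. \<forall>d\<in>Xs. a * d = d * a}" "1 \<in> {a. \<forall>d\<in>Xs. a * d = d * a}" by auto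
  fix x y assume x: "x \<in> {a. \<forall>d\<in>Xs. a * d = d * a}" and y: "y \<in> {a. \<forall>d\<in>Xs. a * d = d * a}"
  show "x + y \<in> {a. \<forall>d\<in>Xs. a * d = d * a}" using x y by (simp add: distrib_left distrib_right)
  show "x * y \<in> {a. \<forall>d\<in>Xs. a * d = d * a}"
  proof (simp, intro ballI)
    fix d assume "d \<in> Xs"
    have "x * y * d = x * (d * y)" using y \<open>d \<in> Xs\<close> by (simp add: mult.assoc)
    also have "\<dots> = (x * d) * y" by (simp add: mult.assoc)
    also have "\<dots> = d * (x * y)" using x \<open>d \<in> Xs\<close> by (simp add: mult.assoc)
    finally show "x * y * d = d * (x * y)" .
  qed
next
  fix x assume x: "x \<in> {a. \<forall>d\<in>Xs. a * d = d * a}"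
  show "- x \<in> {a. \<forall>d\<in>Xs. a * d = d * a}" using x by simp
  show "inverse x \<in> {a. \<forall>d\<in>Xs. a * d = d * a}" using x inv_comm by auto
qed

lemma subalg_mono: "subalgebra K V R \<Longrightarrow> K' \<subseteq> K \<Longrightarrow> subalgebra K' V R"
  unfolding subalgebra_def subalgebra_axioms_def by blast

lemma subalg_props:
  assumes "subalgebra K V R0"
  shows "0 \<in> V" "\<And>x y. x \<in> V \<Longrightarrow> y \<in> V \<Longrightarrow> x + y \<in> V" "\<And>x. x \<in> V \<Longrightarrow> - x \<in> V"
    "\<And>k x. k \<in> K \<Longrightarrow> x \<in> V \<Longrightarrow> k * x \<in> V"
proof -
  have sg: "subgroup V (add_monoid R0)" using subalgebra.axioms(1)[OF assms] .
  show "0 \<in> V" using subgroup.one_closed[OF sg] by simp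
  show "x + y \<in> V" if "x \<in> V" "y \<in> V" for x y using subgroup.m_closed[OF sg that] by simp
  show "- x \<in> V" if "x \<in> V" for x
  proof -
    have "\<ominus>\<^bsub>R0\<^esub> x \<in> V" unfolding a_inv_def using subgroup.m_inv_closed[OF sg that] .
    thus ?thesis by simp
  qed
  show "k * x \<in> V" if "k \<in> K" "x \<in> V" for k x
    using subalgebra.smult_closed[OF assms that] by simp
qed

lemma comb_mult_right:
  assumes V: "subalgebra K V R0" and "set Ks \<subseteq> K" "set Us \<subseteq> U" "\<forall>u\<in>U. u * b \<in> V"
  shows "R.combine Ks Us * b \<in> V"
  using assms(2,3)
proof (induct Ks Us rule: R.combine.induct)
  case (1 k Ks u Us)
  have "(k * u + R.combine Ks Us) * b = k * (u * b) + R.combine Ks Us * b"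
    by (simp add: distrib_right mult.assoc)
  moreover have "k * (u * b) \<in> V" using 1 assms(4) subalg_props(4)[OF V] by auto
  moreover have "R.combine Ks Us * b \<in> V" using 1 by auto
  ultimately show ?case using subalg_props(2)[OF V] by simp
qed (use subalg_props(1)[OF V] in simp_all)

lemma comb_mult_left:
  assumes V: "subalgebra K V R0" and "set Ks \<subseteq> K" "set Us \<subseteq> U" "\<forall>u\<in>U. v * u \<in> V"
    "\<forall>k\<in>K. v * k = k * v"
  shows "v * R.combine Ks Us \<in> V"
  using assms(2,3)
proof (induct Ks Us rule: R.combine.induct)
  case (1 k Ks u Us)
  have "v * (k * u) = k * (v * u)" using assms(5) 1(2) by (simp add: mult.assoc[symmetric])
  hence "v * (k * u + R.combine Ks Us) = k * (v * u) + v * R.combine Ks Us"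
    by (simp add: distrib_left)
  moreover have "k * (v * u) \<in> V" using 1 assms(4) subalg_props(4)[OF V] by auto
  moreover have "v * R.combine Ks Us \<in> V" using 1 by auto
  ultimately show ?case using subalg_props(2)[OF V] by simp
qed (use subalg_props(1)[OF V] in simp_all)

lemma V_inverse:
  fixes V :: "'a::division_ring set"
  assumes fd: "R.finite_dimension (center UNIV) V"
    and mc: "\<And>x y. x \<in> V \<Longrightarrow> y \<in> V \<Longrightarrow> x * y \<in> V" and one: "1 \<in> V"
    and x: "x \<in> V"
  shows "inverse x \<in> V"
proof (cases "x = 0")
  case True
  then show ?thesis using x by simp
next
  case False
  let ?Z = "center (UNIV::'a set)"
  have Zs: "subfield ?Z R0" by (rule Zc_subfield)
  obtain n where n: "R.dimension n ?Z V" using fd by auto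
  then obtain Vs where Vs: "R.independent ?Z Vs" "length Vs = n" "R.Span ?Z Vs = V"
    using R.exists_base[OF Zs] by blast
  have sVs: "set Vs \<subseteq> V" using R.Span_base_incl[OF Zs, of Vs] Vs(3) by simp
  have sub: "subalgebra ?Z V R0" using R.Span_is_subalgebra[OF Zs, of Vs] Vs(3) by simp
  let ?Ys = "map (\<lambda>v. x * v) Vs"
  have sYs: "set ?Ys \<subseteq> V" using sVs mc x by auto
  have indV: "indep_sum ?Z (\<lambda>i. Vs ! i) (length Vs)" using Vs(1) indep_iff[OF Zs] by blast
  have "indep_sum ?Z (\<lambda>i. ?Ys ! i) (length ?Ys)"
    unfolding indep_sum_def
  proof (rule allI, intro impI)
    fix f assume f1: "\<forall>i<length ?Ys. f i \<in> ?Z" and f2: "(\<Sum>i<length ?Ys. f i * ?Ys ! i) = 0"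
    have "(\<Sum>i<length ?Ys. f i * ?Ys ! i) = (\<Sum>i<length Vs. x * (f i * Vs ! i))"
    proof (rule sum.cong)
      fix i assume "i \<in> {..<length Vs}"
      hence "f i \<in> ?Z" "i < length Vs" using f1 by auto
      hence "f i * x = x * f i" unfolding center_def by auto
      thus "f i * ?Ys ! i = x * (f i * Vs ! i)" using \<open>i < length Vs\<close>
        by (simp add: mult.assoc[symmetric])
    qed simp
    also have "\<dots> = x * (\<Sum>i<length Vs. f i * Vs ! i)" by (simp add: sum_distrib_left)
    finally have "(\<Sum>i<length Vs. f i * Vs ! i) = 0" using f2 False by simp
    moreover have "\<forall>i<length Vs. f i \<in> ?Z" using f1 by simp
    ultimately have "\<forall>i<length Vs. f i = 0" using indV unfolding indep_sum_def by blast
    thus "\<forall>i<length ?Ys. f i = 0" by simp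
  qed
  hence indY: "R.independent ?Z ?Ys" using indep_iff[OF Zs] by blast
  have "R.Span ?Z ?Ys = V"
    using R.independent_length_eq_dimension[OF Zs n indY sYs] Vs(2) by simp
  hence "1 \<in> R.Span ?Z ?Ys" using one by simp
  then obtain Ks where Ks: "set Ks \<subseteq> ?Z" "1 = R.combine Ks ?Ys"
    using R.Span_mem_iff_length_version[OF Zs, of ?Ys 1] by auto
  have "R.combine Ks ?Ys = x * R.combine Ks Vs"
    by (rule comb_map_mult) (use Ks(1) in \<open>auto simp: center_def\<close>)
  hence "x * R.combine Ks Vs = 1" using Ks(2) by simp
  hence "inverse x = R.combine Ks Vs" by (rule inverse_unique)
  moreover have "R.combine Ks Vs \<in> V" by (rule comb_in_sub[OF sub Ks(1) sVs])
  ultimately show ?thesis by simp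
qed

lemma wlf_lf:
  assumes wlf: "weakly_locally_finite TYPE('a::division_ring)"
    and alg: "algebraic_dr TYPE('a)" and fin: "finite (S::'a set)"
  shows "fin_dim_over (center UNIV) (gen_div_subring (center UNIV \<union> S))"
proof -
  define Z where "Z = center (UNIV::'a set)"
  define D where "D = gen_div_subring S"
  define F where "F = center D"
  define L where "L = gen_div_subring (Z \<union> S)"
  have Zs: "subfield Z R0" unfolding Z_def by (rule Zc_subfield)
  have dsD: "division_subring D" and dsL: "division_subring L"
    unfolding D_def L_def by (rule ds_gen)+
  have sF: "subfield F R0" unfolding F_def by (rule ds_center_subfield[OF dsD])
  have FD: "F \<subseteq> D" unfolding F_def by (rule center_sub)
  have SD: "S \<subseteq> D" unfolding D_def by (rule gen_sub)
  have dsDp: "0 \<in> D" "1 \<in> D" "\<And>x y. x \<in> D \<Longrightarrow> y \<in> D \<Longrightarrow> x * y \<in> D"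
    using dsD unfolding division_subring_def by auto
  have "fin_dim_over F D" using wlf fin unfolding weakly_locally_finite_def D_def F_def by auto
  hence "R.finite_dimension F D" using fd_to[OF sF FD dsD] by blast
  then obtain nD where "R.dimension nD F D" by auto
  then obtain bs where bs: "R.Span F bs = D" using R.exists_base[OF sF] by blast
  have bsD: "set bs \<subseteq> D" using R.Span_base_incl[OF sF, of bs] bs by simp
  define C where "C = {a::'a. \<forall>d\<in>D. a * d = d * a}"
  define Q where "Q = center C"
  have dsC: "division_subring C" unfolding C_def by (rule centralizer_ds)
  have sQ: "subfield Q R0" unfolding Q_def by (rule ds_center_subfield[OF dsC])
  have QC: "Q \<subseteq> C" unfolding Q_def by (rule center_sub)
  have FQ: "F \<subseteq> Q"
  proof
    fix f assume f: "f \<in> F"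
    have fC: "f \<in> C" using f unfolding C_def F_def center_def by auto
    show "f \<in> Q" unfolding Q_def
    proof (rule centerI[OF fC])
      fix c assume "c \<in> C"
      thus "f * c = c * f" using f FD unfolding C_def by auto
    qed
  qed
  have ZQ: "Z \<subseteq> Q" unfolding Z_def Q_def center_def C_def by auto
  define RQ where "RQ = R0\<lparr>carrier := Q\<rparr>"
  have fQ: "field RQ" unfolding RQ_def by (rule R.subfield_iff(2)[OF sQ])
  interpret Qf: field RQ by (rule fQ)
  have subQ: "subring Q R0" by (rule subfieldE(1)[OF sQ])
  have RQZ: "RQ\<lparr>carrier := Z\<rparr> = R0\<lparr>carrier := Z\<rparr>" unfolding RQ_def by simp
  have sZQ: "subfield Z RQ"
  proof (rule Qf.subfield_iff(1))
    show "field (RQ\<lparr>carrier := Z\<rparr>)" unfolding RQZ by (rule R.subfield_iff(2)[OF Zs])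
    show "Z \<subseteq> carrier RQ" using ZQ unfolding RQ_def by simp
  qed
  define T where "T = (\<lambda>(a, b). a * b) ` (set bs \<times> set bs) \<union> {1} \<union> S"
  have finT: "finite T" unfolding T_def using fin by simp
  have TD: "T \<subseteq> D" unfolding T_def using bsD dsDp SD by (auto intro!: dsDp(3))
  define coord where "coord t = (SOME Ks. set Ks \<subseteq> F \<and> length Ks = length bs \<and> t = R.combine Ks bs)" for t
  have coord: "set (coord t) \<subseteq> F \<and> length (coord t) = length bs \<and> t = R.combine (coord t) bs"
    if "t \<in> T" for t
  proof -
    have "t \<in> R.Span F bs" using that TD bs by auto
    hence "\<exists>Ks. set Ks \<subseteq> F \<and> length Ks = length bs \<and> t = R.combine Ks bs"
      using R.Span_mem_iff_length_version[OF sF, of bs t] by simp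
    thus ?thesis unfolding coord_def by (rule someI_ex)
  qed
  define \<Gamma> where "\<Gamma> = (\<Union>t\<in>T. set (coord t))"
  have fin\<Gamma>: "finite \<Gamma>" unfolding \<Gamma>_def using finT by simp
  have \<Gamma>F: "\<Gamma> \<subseteq> F" unfolding \<Gamma>_def using coord by blast
  obtain gs where gs: "set gs = \<Gamma>" using finite_list[OF fin\<Gamma>] by blast
  have gsQ: "set gs \<subseteq> carrier RQ" using gs \<Gamma>F FQ unfolding RQ_def by auto
  have galg: "(Qf.algebraic over Z) g" if "g \<in> set gs" for g
  proof -
    have "algebraic_over Z g" using alg unfolding algebraic_dr_def Z_def by blast
    hence "(R.algebraic over Z) g" by (rule alg_conv)
    thus ?thesis unfolding over_def RQ_def R.transcendental_consistent[OF subQ] .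
  qed
  define A where "A = Qf.finite_extension Z gs"
  have fdZA': "Qf.finite_dimension Z A"
    unfolding A_def by (rule Qf.finite_extension_finite_dimension(1)[OF sZQ gsQ galg])
  have sAQ: "subfield A RQ"
    unfolding A_def by (rule Qf.finite_extension_is_subfield[OF sZQ gsQ galg])
  have ZA: "Z \<subseteq> A" unfolding A_def
    by (rule Qf.finite_extension_incl) (use ZQ gsQ in \<open>auto simp: RQ_def\<close>)
  have gsA: "set gs \<subseteq> A" unfolding A_def
    by (rule Qf.finite_extension_mem[OF subfieldE(1)[OF sZQ] gsQ])
  have AQ: "A \<subseteq> Q" using subfieldE(3)[OF sAQ] unfolding RQ_def by simp
  have RQA: "RQ\<lparr>carrier := A\<rparr> = R0\<lparr>carrier := A\<rparr>" unfolding RQ_def by simp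
  have sA: "subfield A R0"
  proof (rule R.subfield_iff(1))
    show "field (R0\<lparr>carrier := A\<rparr>)" using Qf.subfield_iff(2)[OF sAQ] unfolding RQA .
    show "A \<subseteq> carrier R0" by simp
  qed
  have fdZA: "R.finite_dimension Z A"
  proof -
    obtain nA where "Qf.dimension nA Z A" using fdZA' by auto
    then obtain Vs where "Qf.Span Z Vs = A" using Qf.exists_base[OF sZQ] by blast
    hence "R.Span Z Vs = A" unfolding RQ_def R.Span_consistent[OF subQ] .
    thus ?thesis using R.Span_finite_dimension[OF Zs, of Vs] by simp
  qed
  define V where "V = R.Span A bs"
  have fdAV: "R.finite_dimension A V" unfolding V_def by (rule R.Span_finite_dimension[OF sA]) simp
  have fdZV: "R.finite_dimension Z V" by (rule R.telescopic_base_dim(1)[OF Zs sA fdZA fdAV])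
  have subAV: "subalgebra A V R0" unfolding V_def by (rule R.Span_is_subalgebra[OF sA]) simp
  have bsV: "set bs \<subseteq> V" unfolding V_def by (rule R.Span_base_incl[OF sA]) simp
  have TV: "T \<subseteq> V"
  proof
    fix t assume t: "t \<in> T"
    have "set (coord t) \<subseteq> A" using coord[OF t] t gs gsA unfolding \<Gamma>_def by blast
    hence "R.combine (coord t) bs \<in> V" by (rule comb_in_sub[OF subAV _ bsV])
    thus "t \<in> V" using coord[OF t] by simp
  qed
  define W where "W = {x::'a. \<forall>q\<in>Q. x * q = q * x}"
  have dsW: "division_subring W" unfolding W_def by (rule centralizer_ds)
  have AW: "A \<subseteq> W"
  proof
    fix a assume "a \<in> A"
    hence "a \<in> Q" using AQ by blast
    have "a * q = q * a" if "q \<in> Q" for q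
      using centerD(2)[of a C q] \<open>a \<in> Q\<close> QC that unfolding Q_def by blast
    thus "a \<in> W" unfolding W_def by blast
  qed
  have bsW: "set bs \<subseteq> W"
  proof
    fix b assume "b \<in> set bs"
    hence "b \<in> D" using bsD by blast
    have "b * q = q * b" if "q \<in> Q" for q
    proof -
      have "q \<in> C" using that QC by blast
      hence "q * b = b * q" using \<open>b \<in> D\<close> unfolding C_def by blast
      thus ?thesis by simp
    qed
    thus "b \<in> W" unfolding W_def by blast
  qed
  have VW: "V \<subseteq> W" unfolding V_def
    by (rule R.subalgebra_Span_incl[OF sA ds_subalgebra[OF dsW AW] bsW])
  have comm: "v * a = a * v" if "v \<in> V" "a \<in> A" for v a
  proof -
    have "v \<in> W" "a \<in> Q" using VW AQ that by blast+
    thus ?thesis unfolding W_def by blast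
  qed
  have mb: "v * b \<in> V" if "v \<in> V" "b \<in> set bs" for v b
  proof -
    obtain Ks where Ks: "set Ks \<subseteq> A" "v = R.combine Ks bs"
      using \<open>v \<in> V\<close> R.Span_mem_iff_length_version[OF sA, of bs v] unfolding V_def by auto
    have "\<forall>u\<in>set bs. u * b \<in> V" using that(2) TV unfolding T_def by auto
    hence "R.combine Ks bs * b \<in> V" by (rule comb_mult_right[OF subAV Ks(1) order_refl])
    thus ?thesis using Ks(2) by simp
  qed
  have mc: "v * w \<in> V" if "v \<in> V" "w \<in> V" for v w
  proof -
    obtain Ks where Ks: "set Ks \<subseteq> A" "w = R.combine Ks bs"
      using \<open>w \<in> V\<close> R.Span_mem_iff_length_version[OF sA, of bs w] unfolding V_def by auto
    have "v * R.combine Ks bs \<in> V"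
      by (rule comb_mult_left[OF subAV Ks(1) order_refl]) (use mb[OF \<open>v \<in> V\<close>] comm[OF \<open>v \<in> V\<close>] in auto)
    thus ?thesis using Ks(2) by simp
  qed
  have oneV: "1 \<in> V" using TV unfolding T_def by auto
  have dsV: "division_subring V" unfolding division_subring_def
  proof (intro conjI ballI)
    show "0 \<in> V" by (rule subalg_props(1)[OF subAV])
    show "1 \<in> V" by (rule oneV)
    fix x y assume "x \<in> V" "y \<in> V"
    thus "x + y \<in> V" "x * y \<in> V" using subalg_props(2)[OF subAV] mc by auto
  next
    fix x assume x: "x \<in> V"
    show "- x \<in> V" by (rule subalg_props(3)[OF subAV x])
    show "inverse x \<in> V" using V_inverse[OF fdZV[unfolded Z_def] mc oneV x] by blast
  qed
  have ZSV: "Z \<union> S \<subseteq> V"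
  proof
    fix y assume "y \<in> Z \<union> S"
    thus "y \<in> V"
    proof
      assume "y \<in> Z"
      hence "y * 1 \<in> V" using subalg_props(4)[OF subAV _ oneV] ZA by blast
      thus "y \<in> V" by simp
    next
      assume "y \<in> S" thus "y \<in> V" using TV unfolding T_def by auto
    qed
  qed
  have LV: "L \<subseteq> V" unfolding L_def by (rule gen_min[OF dsV ZSV])
  have ZL: "Z \<subseteq> L" unfolding L_def using gen_sub[of "Z \<union> S"] by auto
  have "R.finite_dimension Z L"
    by (rule R.subalbegra_incl_imp_finite_dimension[OF Zs fdZV ds_subalgebra[OF dsL ZL] LV])
  hence "fin_dim_over Z L" by (rule fd_from[OF Zs])
  thus ?thesis unfolding Z_def L_def .
qed

theorem theorem5p2:
  "locally_finite TYPE('a::division_ring) \<longleftrightarrow>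
     weakly_locally_finite TYPE('a) \<and> algebraic_dr TYPE('a)"
proof
  assume lf: "locally_finite TYPE('a)"
  have "weakly_locally_finite TYPE('a)"
    unfolding weakly_locally_finite_def using lf_wlf[OF lf] by blast
  moreover have "algebraic_dr TYPE('a)"
    unfolding algebraic_dr_def using lf_alg[OF lf] by blast
  ultimately show "weakly_locally_finite TYPE('a) \<and> algebraic_dr TYPE('a)" by blast
next
  assume "weakly_locally_finite TYPE('a) \<and> algebraic_dr TYPE('a)"
  thus "locally_finite TYPE('a)"
    unfolding locally_finite_def using wlf_lf by blast
qed

end
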